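(* Let $\mathcal R^{rrc}$ be a rich single-crossing domain of restricted classical preferences and $R',R''\in\mathcal R^{rrc}$ distinct. If $R''$ cuts $R'$ from above (at the bundles $(t,q)$ with $q>0$ and $t<\min\{t_{R'},t_{R''}\}$), then $t_{R'}<t_{R''}$.
   Context: $(t',q')<(t'',q'')$ means $t'<t''$, $q'<q''$; $x\le y$ means $x=y$ or $x<y$; $\square(z)=\{x:x\le z\}$. A restricted classical preference is a complete transitive relation $R$ (strict part $P$, indifference $I$) on $[0,t_R]\times[0,1]$, with a unique payment bound $0<t_R<\infty$, such that: (money-monotone) for all $q\in(0,1]$, $t_R\ge t''>t'\ge0$ implies $(t',q)P(t'',q)$; ($q$-monotone) for all $t\in[0,t_R)$, $1\ge q''>q'\ge0$ implies $(t,q'')P(t,q')$; (0-equivalence) $(0,0)I(t_R,q)$ for all $q\in[0,1]$ and $(0,0)I(t,0)$ for all $t\in[0,t_R)$; and $R$ is continuous (closed upper and lower contour sets) on $[0,t_R]\times[0,1]$. Two restricted classical preferences $R',R''$ with $t_{R'}\ne t_{R''}$ satisfy single-crossing if for every $(t,q)$ with $q>0$, $t<\min\{t_{R'},t_{R''}\}$, the indifference sets of $R'$ and $R''$ through $(t,q)$ meet only at $(t,q)$; $R''$ cuts $R'$ from above at such $(t,q)$ if $\square(t,q)\cap\{x:xR''(t,q)\}\subseteq\square(t,q)\cap\{x:xR'(t,q)\}$. A rich single-crossing domain $\mathcal R^{rrc}$ of restricted classical preferences is a set of pairwise single-crossing restricted classical preferences such that for all $x'<x''$ there is a member $R$ with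 $x'Ix''$. *)

theory Defs
  imports "HOL-Analysis.Analysis"
begin

type_synonym bndl = "real \<times> real"
type_synonym pref = "bndl \<Rightarrow> bndl \<Rightarrow> bool"

definition blt :: "bndl \<Rightarrow> bndl \<Rightarrow> bool" where
  "blt x y \<longleftrightarrow> fst x < fst y \<and> snd x < snd y"

definition ble :: "bndl \<Rightarrow> bndl \<Rightarrow> bool" where
  "ble x y \<longleftrightarrow> x = y \<or> blt x y"

definition lowerbox :: "bndl \<Rightarrow> bndl set" where
  "lowerbox z = {x. ble x z}"

definition dom_box :: "real \<Rightarrow> bndl set" where
  "dom_box tR = {0..tR} \<times> {0..1}"

definition strict :: "pref \<Rightarrow> bndl \<Rightarrow> bndl \<Rightarrow> bool" where
  "strict R x y \<longleftrightarrow> R x y \<and> \<not> R y x"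

definition indiff :: "pref \<Rightarrow> bndl \<Rightarrow> bndl \<Rightarrow> bool" where
  "indiff R x y \<longleftrightarrow> R x y \<and> R y x"

definition rrc_pref :: "pref \<Rightarrow> real \<Rightarrow> bool" where
  "rrc_pref R tR \<longleftrightarrow>
     0 < tR \<and>
     (\<forall>x y. R x y \<longrightarrow> x \<in> dom_box tR \<and> y \<in> dom_box tR) \<and>
     (\<forall>x\<in>dom_box tR. \<forall>y\<in>dom_box tR. R x y \<or> R y x) \<and>
     (\<forall>x y z. R x y \<longrightarrow> R y z \<longrightarrow> R x z) \<and>
     (\<forall>q t' t''. 0 < q \<and> q \<le> 1 \<and> 0 \<le> t' \<and> t' < t'' \<and> t'' \<le> tR
                 \<longrightarrow> strict R (t', q) (t'', q)) \<and>
     (\<forall>t q' q''. 0 \<le> t \<and> t < tR \<and> 0 \<le> q' \<and> q' < q'' \<and> q'' \<le> 1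
                 \<longrightarrow> strict R (t, q'') (t, q')) \<and>
     (\<forall>q. 0 \<le> q \<and> q \<le> 1 \<longrightarrow> indiff R (0, 0) (tR, q)) \<and>
     (\<forall>t. 0 \<le> t \<and> t < tR \<longrightarrow> indiff R (0, 0) (t, 0)) \<and>
     (\<forall>z\<in>dom_box tR. closed {x. R x z} \<and> closed {x. R z x})"

definition is_rrc :: "pref \<Rightarrow> bool" where
  "is_rrc R \<longleftrightarrow> (\<exists>tR. rrc_pref R tR)"

definition pbound :: "pref \<Rightarrow> real" where
  "pbound R = (THE tR. rrc_pref R tR)"

definition single_crossing :: "pref \<Rightarrow> pref \<Rightarrow> bool" where
  "single_crossing R' R'' \<longleftrightarrow>
     is_rrc R' \<and> is_rrc R'' \<and> pbound R' \<noteq> pbound R'' \<and>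
     (\<forall>t q. 0 \<le> t \<and> t < min (pbound R') (pbound R'') \<and> 0 < q \<and> q \<le> 1 \<longrightarrow>
        {x. indiff R' x (t, q)} \<inter> {x. indiff R'' x (t, q)} = {(t, q)})"

definition cuts_from_above :: "pref \<Rightarrow> pref \<Rightarrow> bndl \<Rightarrow> bool" where
  "cuts_from_above R'' R' z \<longleftrightarrow>
     lowerbox z \<inter> {x. R'' x z} \<subseteq> lowerbox z \<inter> {x. R' x z}"

definition rich_sc_domain :: "pref set \<Rightarrow> bool" where
  "rich_sc_domain D \<longleftrightarrow>
     (\<forall>R\<in>D. is_rrc R) \<and>
     (\<forall>R'\<in>D. \<forall>R''\<in>D. R' \<noteq> R'' \<longrightarrow> single_crossing R' R'') \<and>
     (\<forall>x' x''. 0 \<le> fst x' \<and> 0 \<le> snd x' \<and> snd x'' \<le> 1 \<and> blt x' x''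
        \<longrightarrow> (\<exists>R\<in>D. indiff R x' x''))"

end

theory Submission
  imports Defs
begin

lemma rrc_unique: assumes "rrc_pref R a" "rrc_pref R b" shows "a = b"
proof (rule ccontr)
  assume "a \<noteq> b"
  then consider "a < b" | "b < a" by linarith
  then show False
  proof cases
    case 1
    have "indiff R (0,0) ((a+b)/2, 0)" using assms(2) 1 assms(1) unfolding rrc_pref_def by auto
    hence "((a+b)/2, 0) \<in> dom_box a" using assms(1) unfolding rrc_pref_def indiff_def by blast
    thus False using 1 unfolding dom_box_def by auto
  next
    case 2
    have "indiff R (0,0) ((a+b)/2, 0)" using assms(1) 2 assms(2) unfolding rrc_pref_def by auto
    hence "((a+b)/2, 0) \<in> dom_box b" using assms(2) unfolding rrc_pref_def indiff_def by blast
    thus False using 2 unfolding dom_box_def by auto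
  qed
qed

lemma pbound_eq: assumes "is_rrc R" shows "rrc_pref R (pbound R)"
proof -
  obtain t where t: "rrc_pref R t" using assms is_rrc_def by blast
  have "pbound R = t" unfolding pbound_def
    using rrc_unique t by (intro the_equality) blast+
  thus ?thesis using t by simp
qed

lemma closed_avoid:
  fixes p :: "'a::metric_space"
  assumes "closed S" "p \<notin> S" shows "\<exists>e>0. \<forall>y. dist y p < e \<longrightarrow> y \<notin> S"
proof -
  have "open (-S)" using assms by auto
  then obtain e where "e>0" "ball p e \<subseteq> -S" using assms open_contains_ball by blast
  thus ?thesis by (metis ComplD mem_ball dist_commute subsetD)
qed

theorem mainTheorem16:
  assumes "rich_sc_domain D"
    and "R' \<in> D" and "R'' \<in> D" and "R' \<noteq> R''"
    and "\<forall>t q. 0 \<le> t \<and> t < min (pbound R') (pbound R'') \<and> 0 < q \<and> q \<le> 1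
               \<longrightarrow> cuts_from_above R'' R' (t, q)"
  shows "pbound R' < pbound R''"
proof (rule ccontr)
  assume nlt: "\<not> ?thesis"
  define a where "a = pbound R'"
  define b where "b = pbound R''"
  have sc: "single_crossing R' R''" using assms unfolding rich_sc_domain_def by blast
  have ra: "rrc_pref R' a" using sc pbound_eq unfolding single_crossing_def a_def by blast
  have rb: "rrc_pref R'' b" using sc pbound_eq unfolding single_crossing_def b_def by blast
  have "a \<noteq> b" using sc unfolding single_crossing_def a_def b_def by blast
  hence ba: "b < a" using nlt a_def b_def by linarith
  have b0: "0 < b" using rb unfolding rrc_pref_def by blast
  have s1: "strict R' (b,1) (a,1)" using ra ba b0 unfolding rrc_pref_def by auto
  have i1: "indiff R' (0,0) (a,1)" using ra unfolding rrc_pref_def by auto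
  have n1: "\<not> R' (0,0) (b,1)"
  proof
    assume "R' (0,0) (b,1)"
    moreover have "R' (a,1) (0,0)" using i1 indiff_def by blast
    ultimately have "R' (a,1) (b,1)" using ra unfolding rrc_pref_def by blast
    thus False using s1 strict_def by blast
  qed
  have "(b,1) \<in> dom_box a" using ba b0 unfolding dom_box_def by auto
  hence "closed {x. R' x (b,1)}" using ra unfolding rrc_pref_def by blast
  then obtain e1 where e1: "e1>0" "\<forall>y. dist y (0,0) < e1 \<longrightarrow> y \<notin> {x. R' x (b,1)}"
    using closed_avoid[of "{x. R' x (b,1)}" "(0,0)"] n1 by auto
  define r :: real where "r = min (e1/2) (1/2)"
  have r: "0 < r" "r < 1" "r < e1" using e1 unfolding r_def by auto
  have "dist (0::real,r) (0,0) < e1" using r by (simp add: dist_Pair_Pair)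
  hence n2: "\<not> R' (0,r) (b,1)" using e1 by auto
  have d0r: "(0,r) \<in> dom_box b" using r b0 unfolding dom_box_def by auto
  hence "closed {x. R'' x (0,r)}" using rb unfolding rrc_pref_def by blast
  moreover have "\<not> R'' (b,1) (0,r)"
  proof
    assume "R'' (b,1) (0,r)"
    moreover have "R'' (0,0) (b,1)" using rb unfolding rrc_pref_def indiff_def by auto
    ultimately have "R'' (0,0) (0,r)" using rb unfolding rrc_pref_def by blast
    moreover have "strict R'' (0,r) (0,0)" using rb r b0 unfolding rrc_pref_def by auto
    ultimately show False using strict_def by blast
  qed
  ultimately obtain e2 where e2: "e2>0" "\<forall>y. dist y (b,1) < e2 \<longrightarrow> y \<notin> {x. R'' x (0,r)}"
    using closed_avoid[of "{x. R'' x (0,r)}" "(b,1)"] by auto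
  define t where "t = max (b/2) (b - e2/2)"
  have t: "0 < t" "t < b" "b - t < e2" using b0 e2 unfolding t_def by auto
  have "dist (t,1::real) (b,1) < e2" using t by (simp add: dist_Pair_Pair dist_real_def)
  hence n3: "\<not> R'' (t,1) (0,r)" using e2 by auto
  have "(t,1) \<in> dom_box b" using t unfolding dom_box_def by auto
  hence y3: "R'' (0,r) (t,1)" using n3 d0r rb unfolding rrc_pref_def by blast
  have "cuts_from_above R'' R' (t,1)" using assms(5) t ba a_def b_def by auto
  moreover have "(0,r) \<in> lowerbox (t,1)" using t r
    unfolding lowerbox_def ble_def blt_def by auto
  ultimately have y4: "R' (0,r) (t,1)" using y3 unfolding cuts_from_above_def by blast
  have "strict R' (t,1) (b,1)" using ra t ba unfolding rrc_pref_def by auto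
  hence "R' (0,r) (b,1)" using y4 ra unfolding rrc_pref_def strict_def by blast
  thus False using n2 by blast
qed

end
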